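(* Let $s\in(\frac12,1)$, $x_0\in\mathbb R^N$, $A,B\in\mathbb R$, and $\mathcal C(x)=A|x-x_0|^{2s-1}+B$. Then $\Delta^s_\infty\mathcal C(x)=0$ for every $x\neq x_0$.
   Context: $S^{N-1}$ unit sphere. For a function $\phi$ differentiable at $x$ (with the integrals below convergent), the infinity fractional Laplacian is: if $\nabla\phi(x)\ne0$ and $v=\nabla\phi(x)/|\nabla\phi(x)|$, $\Delta^s_\infty\phi(x)=\int_0^\infty\frac{\phi(x+\eta v)+\phi(x-\eta v)-2\phi(x)}{\eta^{1+2s}}d\eta$; if $\nabla\phi(x)=0$, $\Delta^s_\infty\phi(x)=\sup_{y\in S^{N-1}}\int_0^\infty\frac{\phi(x+\eta y)-\phi(x)}{\eta^{1+2s}}d\eta+\inf_{z\in S^{N-1}}\int_0^\infty\frac{\phi(x-\eta z)-\phi(x)}{\eta^{1+2s}}d\eta$. *)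

theory Defs
  imports "HOL-Analysis.Analysis"
begin

text \<open>Gradient of a real-valued function at a point (meaningful when the function
is differentiable there; the Frechet derivative in a Euclidean space is unique).\<close>
definition grad :: "('a::euclidean_space \<Rightarrow> real) \<Rightarrow> 'a \<Rightarrow> 'a" where
  "grad \<phi> x = (SOME g. (\<phi> has_derivative (\<lambda>h. g \<bullet> h)) (at x))"

definition two_sided_integrand :: "real \<Rightarrow> ('a::euclidean_space \<Rightarrow> real) \<Rightarrow> 'a \<Rightarrow> 'a \<Rightarrow> real \<Rightarrow> real" where
  "two_sided_integrand s \<phi> x v = (\<lambda>\<eta>. (\<phi> (x + \<eta> *\<^sub>R v) + \<phi> (x - \<eta> *\<^sub>R v) - 2 * \<phi> x) / \<eta> powr (1 + 2 * s))"

definition one_sided_integrand :: "real \<Rightarrow> ('a::euclidean_space \<Rightarrow> real) \<Rightarrow> 'a \<Rightarrow> 'a \<Rightarrow> real \<Rightarrow> real" where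
  "one_sided_integrand s \<phi> x y = (\<lambda>\<eta>. (\<phi> (x + \<eta> *\<^sub>R y) - \<phi> x) / \<eta> powr (1 + 2 * s))"

definition inf_frac_lap_defined :: "real \<Rightarrow> ('a::euclidean_space \<Rightarrow> real) \<Rightarrow> 'a \<Rightarrow> bool" where
  "inf_frac_lap_defined s \<phi> x \<longleftrightarrow> \<phi> differentiable (at x) \<and>
     (if grad \<phi> x \<noteq> 0
      then two_sided_integrand s \<phi> x (grad \<phi> x /\<^sub>R norm (grad \<phi> x)) integrable_on {0<..}
      else (\<forall>y\<in>sphere 0 1. one_sided_integrand s \<phi> x y integrable_on {0<..}
                          \<and> one_sided_integrand s \<phi> x (- y) integrable_on {0<..}))"

definition inf_frac_lap :: "real \<Rightarrow> ('a::euclidean_space \<Rightarrow> real) \<Rightarrow> 'a \<Rightarrow> real" where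
  "inf_frac_lap s \<phi> x =
     (if grad \<phi> x \<noteq> 0
      then integral {0<..} (two_sided_integrand s \<phi> x (grad \<phi> x /\<^sub>R norm (grad \<phi> x)))
      else (SUP y\<in>sphere 0 1. integral {0<..} (one_sided_integrand s \<phi> x y))
         + (INF z\<in>sphere 0 1. integral {0<..} (one_sided_integrand s \<phi> x (- z))))"

end

theory Submission
  imports Defs
begin


lemma grad_eqI:
  fixes \<phi> :: "'a::euclidean_space \<Rightarrow> real"
  assumes "(\<phi> has_derivative (\<lambda>h. g \<bullet> h)) (at x)"
  shows "grad \<phi> x = g"
  unfolding grad_def
proof (rule some_equality)
  fix g' assume "(\<phi> has_derivative (\<lambda>h. g' \<bullet> h)) (at x)"
  from has_derivative_unique[OF this assms]
  have "(\<lambda>h. g' \<bullet> h) = (\<lambda>h. g \<bullet> h)" .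
  then have "g' \<bullet> (g' - g) = g \<bullet> (g' - g)" by metis
  then have "(g' - g) \<bullet> (g' - g) = 0" by (simp add: inner_diff_left)
  then show "g' = g" by simp
qed (rule assms)

lemma phi_deriv:
  fixes x x0 :: "'a::euclidean_space"
  assumes "x \<noteq> x0"
  shows "((\<lambda>y. A * norm (y - x0) powr a + B) has_derivative
          (\<lambda>h. ((A * a * norm (x - x0) powr (a - 2)) *\<^sub>R (x - x0)) \<bullet> h)) (at x)"
proof -
  have n: "GDERIV (\<lambda>y. norm (y - x0)) x :> sgn (x - x0)"
  proof -
    have "GDERIV (\<lambda>y. norm y) (x - x0) :> sgn (x - x0)"
      by (rule GDERIV_norm) (use assms in auto)
    then show ?thesis unfolding gderiv_def
      by (rule has_derivative_compose[of "\<lambda>y. y - x0", unfolded o_def, rotated])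
         (auto intro!: derivative_eq_intros)
  qed
  have p: "DERIV (\<lambda>t. A * t powr a + B) (norm (x - x0)) :> A * (a * norm (x - x0) powr (a - 1))"
    using assms by (auto intro!: derivative_eq_intros)
  have "GDERIV (\<lambda>y. A * norm (y - x0) powr a + B) x :> (A * (a * norm (x - x0) powr (a - 1))) *\<^sub>R sgn (x - x0)"
    using GDERIV_DERIV_compose[OF n p] by simp
  moreover have "(A * (a * norm (x - x0) powr (a - 1))) *\<^sub>R sgn (x - x0) = (A * a * norm (x - x0) powr (a - 2)) *\<^sub>R (x - x0)"
  proof -
    have np: "norm (x - x0) > 0" using assms by simp
    have "A * (a * norm (x - x0) powr (a - 1)) / norm (x - x0) = A * a * norm (x - x0) powr (a - 2)"
      using np by (simp add: powr_diff powr_numeral power2_eq_square)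
    then show ?thesis by (simp add: sgn_div_norm divide_inverse_commute mult.commute)
  qed
  ultimately show ?thesis unfolding gderiv_def by (simp add: inner_commute)
qed


definition MM :: "real \<Rightarrow> real \<Rightarrow> real \<Rightarrow> real" where
  "MM r a t = (\<bar>r - t\<bar> powr a - r powr a) / t powr (a + 2)"
definition PP :: "real \<Rightarrow> real \<Rightarrow> real \<Rightarrow> real" where
  "PP r a t = ((r + t) powr a - r powr a) / t powr (a + 2)"
definition FF :: "real \<Rightarrow> real \<Rightarrow> real \<Rightarrow> real" where
  "FF r a t = (\<bar>r + t\<bar> powr a + \<bar>r - t\<bar> powr a - 2 * r powr a) / t powr (a + 2)"

lemma powr_plus2: "0 < (x::real) \<Longrightarrow> x powr (a + 2) = x powr a * x^2"
  by (simp add: powr_add powr_numeral)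

context
  fixes r a :: real
  assumes r: "0 < r" and a0: "0 < a" and a1: "a < 1"
begin

lemma MM_cont: "continuous_on {0<..} (MM r a)"
  unfolding MM_def using a0
  by (intro continuous_intros continuous_on_powr') auto

lemma PP_cont: "continuous_on {0<..} (PP r a)"
  unfolding PP_def using a0 r
  by (intro continuous_intros continuous_on_powr') auto

lemma FF_cont: "continuous_on {0<..} (FF r a)"
  unfolding FF_def using a0 r
  by (intro continuous_intros continuous_on_powr') auto

lemma FF_eq: "0 < t \<Longrightarrow> FF r a t = PP r a t + MM r a t"
  unfolding FF_def PP_def MM_def using r by (simp add: diff_divide_distrib add_divide_distrib)

lemma psi_id:
  assumes t: "0 < t"
  shows "(r^2 / (r + t)^2) * MM r a (r * t / (r + t)) = - PP r a t"
proof -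
  define q where "q = r + t"
  have q: "0 < q" using r t by (simp add: q_def)
  have ab: "\<bar>r - r * t / q\<bar> = r^2 / q"
    using q r t by (simp add: q_def field_simps power2_eq_square)
  have "MM r a (r * t / q) = ((r^2/q) powr a - r powr a) / (r * t / q) powr (a + 2)"
    unfolding MM_def ab ..
  also have "... = (r powr a * r powr a / q powr a - r powr a) / ((r powr a * t powr a / q powr a) * (r * t / q)^2)"
    using q r t by (simp add: powr_plus2 powr_divide powr_mult power2_eq_square)
  also have "... = (r powr a - q powr a) * q^2 / (t powr a * t^2 * r^2)"
    using q r t by (simp add: field_simps power2_eq_square)
  finally have e1: "MM r a (r * t / q) = (r powr a - q powr a) * q^2 / (t powr a * t^2 * r^2)" .
  have e2: "PP r a t = (q powr a - r powr a) / (t powr a * t^2)"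
    unfolding PP_def q_def using t by (simp add: powr_plus2)
  show ?thesis unfolding q_def[symmetric] e1 e2 using q r t
    by (simp add: field_simps power2_eq_square)
qed

lemma chi_id:
  assumes u: "r < u"
  shows "(-(r^2 / (u - r)^2)) * MM r a (r + r^2 / (u - r)) = MM r a u"
proof -
  define p where "p = u - r"
  have p: "0 < p" using u by (simp add: p_def)
  have ab: "\<bar>r - (r + r^2/p)\<bar> = r^2 / p" using p by simp
  have ch: "r + r^2/p = r * u / p" using p by (simp add: p_def field_simps power2_eq_square)
  have u0: "0 < u" using u r by simp
  have "MM r a (r + r^2/p) = ((r^2/p) powr a - r powr a) / (r * u / p) powr (a + 2)"
    unfolding MM_def ab ch[symmetric] ..
  also have "... = (r powr a * r powr a / p powr a - r powr a) / ((r powr a * u powr a / p powr a) * (r * u / p)^2)"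
    using p r u0 by (simp add: powr_plus2 powr_divide powr_mult power2_eq_square)
  also have "... = (r powr a - p powr a) * p^2 / (u powr a * u^2 * r^2)"
    using p r u0 by (simp add: field_simps power2_eq_square)
  finally have e1: "MM r a (r + r^2/p) = (r powr a - p powr a) * p^2 / (u powr a * u^2 * r^2)" .
  have e2: "MM r a u = (p powr a - r powr a) / (u powr a * u^2)"
    unfolding MM_def p_def using u u0 by (simp add: powr_plus2)
  show ?thesis unfolding p_def[symmetric] e1 e2 using p r u0
    by (simp add: field_simps power2_eq_square)
qed

lemma psi_mono: "0 \<le> x \<Longrightarrow> x \<le> y \<Longrightarrow> r * x / (r + x) \<le> r * y / (r + y)"
  using r by (simp add: field_simps mult_left_mono)

lemma P_int:
  assumes c: "0 < c" "c \<le> d"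
  shows "(PP r a has_integral - integral {r*c/(r+c)..r*d/(r+d)} (MM r a)) {c..d}"
proof -
  have "((\<lambda>t. (r^2/(r+t)^2) *\<^sub>R MM r a (r*t/(r+t))) has_integral
          integral {r*c/(r+c)..r*d/(r+d)} (MM r a)) {c..d}"
  proof (rule has_integral_substitution)
    show "c \<le> d" by fact
    show "r * c / (r + c) \<le> r * d / (r + d)" using c by (intro psi_mono) auto
    show "(\<lambda>t. r * t / (r + t)) ` {c..d} \<subseteq> {r*c/(r+c)..r*d/(r+d)}"
      using c by (auto intro!: psi_mono)
    have "0 < r*c/(r+c)" using c r by simp
    then have "{r*c/(r+c)..r*d/(r+d)} \<subseteq> {0<..}" by auto
    then show "continuous_on {r*c/(r+c)..r*d/(r+d)} (MM r a)"
      using MM_cont continuous_on_subset by blast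
    fix x assume x: "x \<in> {c..d}"
    then have "r + x \<noteq> 0" using c r by auto
    then show "((\<lambda>t. r * t / (r + t)) has_field_derivative r^2/(r+x)^2) (at x within {c..d})"
      by (auto intro!: derivative_eq_intros simp: field_simps power2_eq_square)
  qed
  then have "((\<lambda>t. - ((r^2/(r+t)^2) *\<^sub>R MM r a (r*t/(r+t)))) has_integral
          - integral {r*c/(r+c)..r*d/(r+d)} (MM r a)) {c..d}"
    by (rule has_integral_neg)
  moreover have "\<And>t. t \<in> {c..d} \<Longrightarrow> - ((r^2/(r+t)^2) *\<^sub>R MM r a (r*t/(r+t))) = PP r a t"
    using psi_id c by auto
  ultimately show ?thesis using has_integral_cong by (metis (no_types, lifting))
qed

lemma chi_mono: "r < x \<Longrightarrow> x \<le> y \<Longrightarrow> r + r^2 / (y - r) \<le> r + r^2 / (x - r)"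
  using r by (simp add: frac_le)

lemma M_int_chi:
  assumes c: "r < c" "c \<le> d"
  shows "(MM r a has_integral - integral {r + r^2/(d-r)..r + r^2/(c-r)} (MM r a)) {c..d}"
proof -
  let ?g = "\<lambda>u. r + r^2/(u-r)"
  have "((\<lambda>u. (-(r^2/(u-r)^2)) *\<^sub>R MM r a (?g u)) has_integral
          (integral {?g c..?g d} (MM r a) - integral {?g d..?g c} (MM r a))) {c..d}"
  proof (rule has_integral_substitution_general[of "{}"])
    show "c \<le> d" by fact
    show "?g ` {c..d} \<subseteq> {?g d..?g c}"
      using c r by (auto intro!: divide_left_mono mult_pos_pos)
    have "0 < ?g d" using c r by (intro add_pos_nonneg) auto
    then have "{?g d..?g c} \<subseteq> {0<..}" by auto
    then show "continuous_on {?g d..?g c} (MM r a)"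
      using MM_cont continuous_on_subset by blast
    show "continuous_on {c..d} ?g" using c by (intro continuous_intros) auto
    fix x assume x: "x \<in> {c..d} - {}"
    then have "x - r \<noteq> 0" using c by auto
    then show "(?g has_field_derivative (-(r^2/(x-r)^2))) (at x within {c..d})"
      by (auto intro!: derivative_eq_intros simp: field_simps power2_eq_square)
  qed auto
  moreover have "integral {?g c..?g d} (MM r a) = 0"
  proof (cases "c = d")
    case False
    then have "?g d < ?g c" using c r by (simp add: divide_strict_left_mono)
    then show ?thesis by simp
  qed simp
  moreover have "\<And>u. u \<in> {c..d} \<Longrightarrow> (-(r^2/(u-r)^2)) *\<^sub>R MM r a (?g u) = MM r a u"
    using chi_id c by auto
  ultimately show ?thesis using has_integral_cong by (metis (no_types, lifting) diff_0)
qed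

lemma FF_nonpos:
  assumes t: "0 < t" "t \<le> r/2"
  shows "FF r a t \<le> 0"
proof -
  have der: "\<And>x. 0 < x \<Longrightarrow> DERIV (\<lambda>x. x powr a) x :> a * x powr (a - 1)"
    by (rule has_real_derivative_powr)
  obtain z1 where z1: "r < z1" "z1 < r + t" "(r+t) powr a - r powr a = t * (a * z1 powr (a-1))"
    using MVT2[of r "r+t" "\<lambda>x. x powr a" "\<lambda>x. a * x powr (a - 1)"] der t r by force
  obtain z2 where z2: "r - t < z2" "z2 < r" "r powr a - (r-t) powr a = t * (a * z2 powr (a-1))"
    using MVT2[of "r-t" r "\<lambda>x. x powr a" "\<lambda>x. a * x powr (a - 1)"] der t r by force
  have "z1 powr (a-1) \<le> z2 powr (a-1)"
    using z1 z2 t a1 by (intro powr_mono2') auto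
  then have m: "t * (a * z1 powr (a-1)) \<le> t * (a * z2 powr (a-1))"
    using t a0 by (intro mult_left_mono) auto
  have e: "\<bar>r + t\<bar> = r + t" "\<bar>r - t\<bar> = r - t" using t r by auto
  have num: "\<bar>r + t\<bar> powr a + \<bar>r - t\<bar> powr a - 2 * r powr a \<le> 0"
    unfolding e using m z1(3) z2(3) by linarith
  show ?thesis unfolding FF_def using num t by (simp add: divide_nonpos_pos)
qed

lemma FF_nonneg:
  assumes t: "2 * r \<le> t"
  shows "0 \<le> FF r a t"
proof -
  have "r powr a \<le> \<bar>r + t\<bar> powr a" using t r a0 by (intro powr_mono2) auto
  moreover have "r powr a \<le> \<bar>r - t\<bar> powr a" using t r a0 by (intro powr_mono2) auto
  ultimately show ?thesis unfolding FF_def using t r by (intro divide_nonneg_nonneg) auto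
qed

lemma MM_bound:
  assumes t: "0 < t" "t \<le> r"
  shows "\<bar>MM r a t\<bar> \<le> r powr (a - 1) * t powr (-(a+1))"
proof -
  have x: "0 \<le> 1 - t/r" "1 - t/r \<le> 1" using t r by auto
  have h: "(1 - t/r) powr 1 \<le> (1 - t/r) powr a" by (rule powr_mono'[OF _ x]) (use a1 in simp)
  have "1 - t/r \<le> (1 - t/r) powr a" using h x by simp
  then have "r powr a * (1 - t/r) \<le> r powr a * (1 - t/r) powr a"
    using x by (simp add: mult_left_mono)
  also have "... = (r - t) powr a"
    using x r by (simp add: powr_mult[symmetric] right_diff_distrib)
  finally have l1: "r powr a - r powr a * t / r \<le> \<bar>r - t\<bar> powr a"
    using t by (simp add: right_diff_distrib)
  have l2: "\<bar>r - t\<bar> powr a \<le> r powr a" using t a0 by (intro powr_mono2) auto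
  have tt: "t powr a * t powr (-(a+1)) = 1 / t"
    using t by (simp add: powr_add[symmetric] powr_minus divide_inverse)
  have rr: "r powr a * t / r = r powr (a - 1) * t" using r by (simp add: powr_diff)
  have "\<bar>MM r a t\<bar> = (r powr a - \<bar>r - t\<bar> powr a) / t powr (a+2)"
    unfolding MM_def using l2 t by (simp add: abs_div)
  also have "... \<le> (r powr (a - 1) * t) / t powr (a+2)"
    using l1 rr t by (intro divide_right_mono) auto
  also have "... = r powr (a - 1) * t powr (-(a+1))"
    using t tt by (simp add: powr_plus2 powr_minus powr_add field_simps power2_eq_square)
  finally show ?thesis .
qed

lemma eps_bound:
  assumes e: "0 < e" "e \<le> r"
  shows "\<bar>integral {r*e/(r+e)..e} (MM r a)\<bar> \<le> (r powr (a-1) * 2 powr (a+1) / r) * e powr (1-a)"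
proof -
  define p where "p = r*e/(r+e)"
  have p0: "0 < p" using e r by (simp add: p_def)
  have pe: "p \<le> e" using e r by (simp add: p_def field_simps)
  have p2: "e/2 \<le> p" using e r by (simp add: p_def field_simps)
  have ep: "e - p = e^2/(r+e)" using e r by (simp add: p_def field_simps power2_eq_square)
  have cont: "continuous_on {p..e} (MM r a)"
    by (rule continuous_on_subset[OF MM_cont]) (use p0 in auto)
  have "\<bar>integral {p..e} (MM r a)\<bar> \<le> (r powr (a-1) * p powr (-(a+1))) * (e - p)"
  proof -
    have "norm (integral {p..e} (MM r a)) \<le> (r powr (a-1) * p powr (-(a+1))) * (e - p)"
    proof (rule integral_bound[OF pe cont])
      fix t assume t: "t \<in> {p..e}"
      have "\<bar>MM r a t\<bar> \<le> r powr (a - 1) * t powr (-(a+1))"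
        using t p0 e by (intro MM_bound) simp_all
      also have "... \<le> r powr (a - 1) * p powr (-(a+1))"
      proof (rule mult_left_mono)
        show "t powr (-(a+1)) \<le> p powr (-(a+1))"
          using t p0 a0 by (intro powr_mono2') simp_all
      qed (rule powr_ge_zero)
      finally show "norm (MM r a t) \<le> r powr (a-1) * p powr (-(a+1))" by simp
    qed
    then show ?thesis by simp
  qed
  also have "... \<le> (r powr (a-1) * (e/2) powr (-(a+1))) * (e^2 / r)"
  proof (rule mult_mono)
    show "r powr (a-1) * p powr (-(a+1)) \<le> r powr (a-1) * (e/2) powr (-(a+1))"
    proof (rule mult_left_mono)
        have "0 < e/2" using e by simp
        then show "p powr (-(a+1)) \<le> (e/2) powr (-(a+1))"
          using p2 a0 by (intro powr_mono2') simp_all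
      qed (rule powr_ge_zero)
    show "e - p \<le> e^2/r" unfolding ep using e r by (intro divide_left_mono) auto
    show "0 \<le> e - p" using pe by simp
    show "0 \<le> r powr (a-1) * (e/2) powr (-(a+1))" by (intro mult_nonneg_nonneg powr_ge_zero)
  qed
  also have "... = (r powr (a-1) * 2 powr (a+1) / r) * e powr (1-a)"
  proof -
    have h1: "(e/2) powr (-(a+1)) = 2 powr (a+1) * e powr (-(a+1))"
    proof -
      have "(e/2) powr (-(a+1)) = e powr (-(a+1)) / 2 powr (-(a+1))"
        by (rule powr_divide)
      also have "2 powr (-(a+1)) = inverse (2 powr (a+1))" by (rule powr_minus)
      finally show ?thesis by (simp only: divide_inverse inverse_inverse_eq mult.commute)
    qed
    have h2: "e powr (-(a+1)) * e^2 = e powr (1-a)"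
    proof -
      have e2: "e^2 = e powr 2" using e by (simp add: powr_numeral)
      have "e powr (-(a+1)) * e powr 2 = e powr (-(a+1) + 2)" by (simp only: powr_add)
      also have "-(a+1) + 2 = 1 - a" by simp
      finally show ?thesis unfolding e2 .
    qed
    show ?thesis unfolding h1 h2[symmetric] by (simp add: algebra_simps)
  qed
  finally show ?thesis unfolding p_def .
qed

lemma eps_lim: "(\<lambda>k. integral {r*(r/(real k+2))/(r+r/(real k+2))..r/(real k+2)} (MM r a)) \<longlonglongrightarrow> 0"
proof (rule Lim_null_comparison)
  let ?K = "r powr (a-1) * 2 powr (a+1) / r"
  show "\<forall>\<^sub>F k in sequentially. norm (integral {r*(r/(real k+2))/(r+r/(real k+2))..r/(real k+2)} (MM r a))
          \<le> ?K * (r/(real k+2)) powr (1-a)"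
  proof (rule always_eventually, rule allI)
    fix k :: nat
    have "0 < r/(real k+2)" "r/(real k+2) \<le> r" using r by (auto simp: field_simps)
    then show "norm (integral {r*(r/(real k+2))/(r+r/(real k+2))..r/(real k+2)} (MM r a))
          \<le> ?K * (r/(real k+2)) powr (1-a)" using eps_bound[of "r/(real k+2)"] by (simp only: real_norm_def)
  qed
  show "(\<lambda>k. ?K * (r/(real k+2)) powr (1-a)) \<longlonglongrightarrow> 0"
  proof -
    have "(\<lambda>k. r/(real k+2)) \<longlonglongrightarrow> 0"
    proof -
      have i: "(\<lambda>k. inverse (real (Suc (Suc k)))) \<longlonglongrightarrow> 0"
        by (rule LIMSEQ_Suc[OF LIMSEQ_inverse_real_of_nat])
      have "(\<lambda>k. r * inverse (real (Suc (Suc k)))) \<longlonglongrightarrow> r * 0"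
        by (intro tendsto_mult tendsto_const i)
      then show ?thesis by (simp add: divide_inverse add.commute)
    qed
    then have "(\<lambda>k. ?K * (r/(real k+2)) powr (1-a)) \<longlonglongrightarrow> ?K * 0 powr (1-a)"
      using r a1 by (intro tendsto_intros) auto
    then show ?thesis by simp
  qed
qed

lemma MM_int: "0 < c \<Longrightarrow> MM r a integrable_on {c..d}"
  by (rule integrable_continuous_interval, rule continuous_on_subset[OF MM_cont]) auto

lemma FF_int: "0 < c \<Longrightarrow> FF r a integrable_on {c..d}"
  by (rule integrable_continuous_interval, rule continuous_on_subset[OF FF_cont]) auto

lemma FF_has_int:
  assumes c: "0 < c" and "(PP r a has_integral i) {c..d}" "(MM r a has_integral j) {c..d}"
  shows "(FF r a has_integral (i + j)) {c..d}"
proof -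
  have "((\<lambda>t. PP r a t + MM r a t) has_integral (i + j)) {c..d}"
    using assms by (intro has_integral_add)
  moreover have "\<And>t. t \<in> {c..d} \<Longrightarrow> PP r a t + MM r a t = FF r a t"
    using FF_eq c by auto
  ultimately show ?thesis using has_integral_cong by (metis (no_types, lifting))
qed

lemma L_val:
  assumes e: "0 < e" "e \<le> r/2"
  shows "integral {e..r} (FF r a) = integral {r/2..r} (MM r a) - integral {r*e/(r+e)..e} (MM r a)"
proof -
  have rr: "r*r/(r+r) = r/2" using r by simp
  have "(PP r a has_integral - integral {r*e/(r+e)..r/2} (MM r a)) {e..r}"
    using P_int[of e r] e r rr by simp
  moreover have "(MM r a has_integral integral {e..r} (MM r a)) {e..r}"
    using MM_int e by blast
  ultimately have "(FF r a has_integral (- integral {r*e/(r+e)..r/2} (MM r a) + integral {e..r} (MM r a))) {e..r}"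
    using e by (intro FF_has_int) auto
  then have i: "integral {e..r} (FF r a) = - integral {r*e/(r+e)..r/2} (MM r a) + integral {e..r} (MM r a)"
    by (rule integral_unique)
  have p0: "0 < r*e/(r+e)" using e r by simp
  have pe: "r*e/(r+e) \<le> e" using e r by (simp add: field_simps)
  have c1: "integral {r*e/(r+e)..e} (MM r a) + integral {e..r/2} (MM r a) = integral {r*e/(r+e)..r/2} (MM r a)"
    by (rule Henstock_Kurzweil_Integration.integral_combine[OF pe]) (use p0 e in \<open>auto intro: MM_int\<close>)
  have c2: "integral {e..r/2} (MM r a) + integral {r/2..r} (MM r a) = integral {e..r} (MM r a)"
    by (rule Henstock_Kurzweil_Integration.integral_combine) (use e r in \<open>auto intro: MM_int\<close>)
  show ?thesis using i c1 c2 by linarith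
qed

lemma R_val:
  assumes b: "2 * r \<le> b"
  shows "integral {r..b} (FF r a) = - integral {r/2..r*b/(r+b)} (MM r a)
            + integral {r/2..r + r^2/(b-r)} (MM r a) - integral {r/2..r} (MM r a)"
proof -
  have rr: "r*r/(r+r) = r/2" using r by simp
  have rb: "r \<le> b" using b r by simp
  have hP: "(PP r a has_integral - integral {r/2..r*b/(r+b)} (MM r a)) {r..b}"
    using P_int[of r b] rb r rr by simp
  have c2r: "r + r^2/(2*r - r) = 2 * r" using r by (simp add: power2_eq_square)
  have h2: "(MM r a has_integral - integral {r + r^2/(b-r)..2*r} (MM r a)) {2*r..b}"
    using M_int_chi[of "2*r" b] b r c2r by simp
  have h1: "(MM r a has_integral integral {r..2*r} (MM r a)) {r..2*r}"
    using MM_int r by blast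
  have hM: "(MM r a has_integral (integral {r..2*r} (MM r a) - integral {r + r^2/(b-r)..2*r} (MM r a))) {r..b}"
    using has_integral_combine[OF _ b h1 h2] r by simp
  have "integral {r..b} (FF r a) = - integral {r/2..r*b/(r+b)} (MM r a) +
      (integral {r..2*r} (MM r a) - integral {r + r^2/(b-r)..2*r} (MM r a))"
    using FF_has_int[OF r hP hM] by (rule integral_unique)
  moreover have "integral {r/2..r} (MM r a) + integral {r..2*r} (MM r a) = integral {r/2..2*r} (MM r a)"
    by (rule Henstock_Kurzweil_Integration.integral_combine) (use r in \<open>auto intro: MM_int\<close>)
  moreover have "integral {r/2..r + r^2/(b-r)} (MM r a) + integral {r + r^2/(b-r)..2*r} (MM r a) = integral {r/2..2*r} (MM r a)"
  proof (intro Henstock_Kurzweil_Integration.integral_combine MM_int)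
    have "0 \<le> r^2/(b-r)" using rb by simp
    then show "r/2 \<le> r + r^2/(b-r)" using r by linarith
    have "r^2/(b-r) \<le> r^2/r" using b r by (intro divide_left_mono) auto
    then show "r + r^2/(b-r) \<le> 2*r" using r by (simp add: power2_eq_square)
  qed (use r in auto)
  ultimately show ?thesis by linarith
qed

lemma left_part: "(FF r a has_integral integral {r/2..r} (MM r a)) {0<..r}"
proof -
  define ep where "ep k = r / (real k + 2)" for k :: nat
  define f where "f k = (\<lambda>x. if x \<in> {ep k..r} then FF r a x else 0)" for k
  have ep0: "0 < ep k" for k using r by (simp add: ep_def)
  have ep2: "ep k \<le> r/2" for k using r by (simp add: ep_def field_simps)
  have epdec: "ep (Suc k) \<le> ep k" for k using r by (simp add: ep_def frac_le)
  have eplim: "ep \<longlonglongrightarrow> 0"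
  proof -
    have i: "(\<lambda>k. inverse (real (Suc (Suc k)))) \<longlonglongrightarrow> 0"
      by (rule LIMSEQ_Suc[OF LIMSEQ_inverse_real_of_nat])
    have "(\<lambda>k. r * inverse (real (Suc (Suc k)))) \<longlonglongrightarrow> r * 0"
      by (intro tendsto_mult tendsto_const i)
    moreover have "ep = (\<lambda>k. r * inverse (real (Suc (Suc k))))"
      by (auto simp: ep_def divide_inverse add.commute)
    ultimately show ?thesis by simp
  qed
  have inter: "{ep k..r} \<inter> {0<..r} = {ep k..r}" for k using ep0[of k] by auto
  have fint: "(f k has_integral integral {ep k..r} (FF r a)) {0<..r}" for k
    unfolding f_def has_integral_restrict_Int inter
    using FF_int[OF ep0] by blast
  have lim: "(\<lambda>k. integral {0<..r} (f k)) \<longlonglongrightarrow> integral {r/2..r} (MM r a)"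
  proof -
    have "(\<lambda>k. integral {r/2..r} (MM r a) - integral {r*ep k/(r+ep k)..ep k} (MM r a))
            \<longlonglongrightarrow> integral {r/2..r} (MM r a) - 0"
      using eps_lim unfolding ep_def by (intro tendsto_intros)
    moreover have "integral {0<..r} (f k) = integral {r/2..r} (MM r a) - integral {r*ep k/(r+ep k)..ep k} (MM r a)" for k
      using integral_unique[OF fint[of k]] L_val[OF ep0 ep2] by simp
    ultimately show ?thesis by simp
  qed
  have mc: "FF r a integrable_on {0<..r} \<and> (\<lambda>k. integral {0<..r} (f k)) \<longlonglongrightarrow> integral {0<..r} (FF r a)"
  proof (rule monotone_convergence_decreasing)
    show "f k integrable_on {0<..r}" for k using fint by blast
    show "f (Suc k) x \<le> f k x" if x: "x \<in> {0<..r}" for k x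
    proof (cases "x \<in> {ep k..r}")
      case True
      then have "x \<in> {ep (Suc k)..r}" using epdec[of k] by auto
      then show ?thesis using True by (simp add: f_def)
    next
      case False
      then have "x < ep k" using x by auto
      then have "FF r a x \<le> 0" using x ep2[of k] by (intro FF_nonpos) auto
      then show ?thesis using False x by (auto simp: f_def)
    qed
    show "(\<lambda>k. f k x) \<longlonglongrightarrow> FF r a x" if x: "x \<in> {0<..r}" for x
    proof (rule tendsto_eventually)
      have "\<forall>\<^sub>F k in sequentially. ep k < x" using eplim x by (intro order_tendstoD) auto
      then show "\<forall>\<^sub>F k in sequentially. f k x = FF r a x"
        by eventually_elim (use x in \<open>auto simp: f_def\<close>)
    qed
    show "bounded (range (\<lambda>k. integral {0<..r} (f k)))"
      using lim by (rule convergent_imp_bounded)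
  qed
  then show ?thesis using LIMSEQ_unique[OF lim] mc
    by (metis has_integral_integrable_integral)
qed

lemma right_part: "(FF r a has_integral - integral {r/2..r} (MM r a)) {r..}"
proof -
  define bb where "bb k = 2 * r + real k" for k :: nat
  define f where "f k = (\<lambda>x. if x \<in> {r..bb k} then FF r a x else 0)" for k
  define G where "G x = integral {r/2..x} (MM r a)" for x
  have b2: "2 * r \<le> bb k" for k by (simp add: bb_def)
  have inter: "{r..bb k} \<inter> {r..} = {r..bb k}" for k by auto
  have fint: "(f k has_integral integral {r..bb k} (FF r a)) {r..}" for k
    unfolding f_def has_integral_restrict_Int inter
    using FF_int[OF r] by blast
  have Gc: "continuous_on {r/2..2*r} G"
    unfolding G_def by (rule indefinite_integral_continuous_1, rule MM_int) (use r in auto)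
  have binf: "filterlim (\<lambda>k. 3 * r + real k) at_infinity sequentially"
    by (rule filterlim_at_top_imp_at_infinity, rule filterlim_tendsto_add_at_top[OF tendsto_const])
       (rule filterlim_real_sequentially)
  have binf': "filterlim (\<lambda>k. r + real k) at_infinity sequentially"
    by (rule filterlim_at_top_imp_at_infinity, rule filterlim_tendsto_add_at_top[OF tendsto_const])
       (rule filterlim_real_sequentially)
  have l1: "(\<lambda>k. r * bb k / (r + bb k)) \<longlonglongrightarrow> r"
  proof -
    have "(\<lambda>k. r - r^2 / (3 * r + real k)) \<longlonglongrightarrow> r - 0"
      by (intro tendsto_intros tendsto_divide_0[OF tendsto_const binf])
    moreover have "r * bb k / (r + bb k) = r - r^2 / (3 * r + real k)" for k
      using r by (simp add: bb_def field_simps power2_eq_square)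
    ultimately show ?thesis by simp
  qed
  have l2: "(\<lambda>k. r + r^2/(bb k - r)) \<longlonglongrightarrow> r"
  proof -
    have "(\<lambda>k. r + r^2 / (r + real k)) \<longlonglongrightarrow> r + 0"
      by (intro tendsto_intros tendsto_divide_0[OF tendsto_const binf'])
    moreover have "bb k - r = r + real k" for k by (simp add: bb_def)
    ultimately show ?thesis by simp
  qed
  have in1: "r * bb k / (r + bb k) \<in> {r/2..2*r}" for k
  proof -
    have "r * bb k / (r + bb k) = r - r^2 / (r + bb k)" using r b2[of k]
      by (simp add: field_simps power2_eq_square)
    moreover have "r^2/(r + bb k) \<le> r^2/(2*r)" using r b2[of k] by (intro divide_left_mono) auto
    moreover have "0 \<le> r^2/(r + bb k)" using r b2[of k] by simp
    ultimately show ?thesis using r by (auto simp: power2_eq_square)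
  qed
  have in2: "r + r^2/(bb k - r) \<in> {r/2..2*r}" for k
  proof -
    have "r^2/(bb k - r) \<le> r^2/r" using r b2[of k] by (intro divide_left_mono) auto
    moreover have "r^2/r = r" using r by (simp add: power2_eq_square)
    moreover have "0 \<le> r^2/(bb k - r)" using r b2[of k] by simp
    ultimately have "r/2 \<le> r + r^2/(bb k - r)" "r + r^2/(bb k - r) \<le> 2*r" using r by linarith+
    then show ?thesis by simp
  qed
  have lim: "(\<lambda>k. integral {r..} (f k)) \<longlonglongrightarrow> - G r"
  proof -
    have a1': "(\<lambda>k. G (r * bb k / (r + bb k))) \<longlonglongrightarrow> G r"
      by (rule continuous_on_tendsto_compose[OF Gc l1]) (use r in1 in auto)
    have a2': "(\<lambda>k. G (r + r^2/(bb k - r))) \<longlonglongrightarrow> G r"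
      by (rule continuous_on_tendsto_compose[OF Gc l2]) (use r in2 in auto)
    have "(\<lambda>k. - G (r * bb k / (r + bb k)) + G (r + r^2/(bb k - r)) - G r) \<longlonglongrightarrow> - G r + G r - G r"
      by (intro tendsto_intros a1' a2')
    moreover have "integral {r..} (f k) = - G (r * bb k / (r + bb k)) + G (r + r^2/(bb k - r)) - G r" for k
      using integral_unique[OF fint[of k]] R_val[OF b2[of k]] by (simp add: G_def)
    ultimately show ?thesis by simp
  qed
  have mc: "FF r a integrable_on {r..} \<and> (\<lambda>k. integral {r..} (f k)) \<longlonglongrightarrow> integral {r..} (FF r a)"
  proof (rule monotone_convergence_increasing)
    show "f k integrable_on {r..}" for k using fint by blast
    show "f k x \<le> f (Suc k) x" if x: "x \<in> {r..}" for k x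
    proof (cases "x \<in> {r..bb k}")
      case True
      then have "x \<in> {r..bb (Suc k)}" by (auto simp: bb_def)
      then show ?thesis using True by (simp add: f_def)
    next
      case False
      then have "bb k < x" using x by auto
      then have "0 \<le> FF r a x" using b2[of k] by (intro FF_nonneg) auto
      then show ?thesis using False x by (auto simp: f_def)
    qed
    show "(\<lambda>k. f k x) \<longlonglongrightarrow> FF r a x" if x: "x \<in> {r..}" for x
    proof (rule tendsto_eventually)
      obtain n :: nat where n: "x \<le> real n" using real_arch_simple by blast
      have "\<forall>\<^sub>F k in sequentially. k \<ge> n" by (rule eventually_ge_at_top)
      then show "\<forall>\<^sub>F k in sequentially. f k x = FF r a x"
      proof eventually_elim
        case (elim k)
        then have "x \<le> bb k" using n r by (simp add: bb_def)
        then show ?case using x by (simp add: f_def)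
      qed
    qed
    show "bounded (range (\<lambda>k. integral {r..} (f k)))"
      using lim by (rule convergent_imp_bounded)
  qed
  then show ?thesis using LIMSEQ_unique[OF lim] mc unfolding G_def
    by (metis has_integral_integrable_integral)
qed

lemma FF_total: "(FF r a has_integral 0) {0<..}"
proof -
  have "(FF r a has_integral (integral {r/2..r} (MM r a) + - integral {r/2..r} (MM r a))) ({0<..r} \<union> {r..})"
    by (rule has_integral_Un[OF left_part right_part]) (auto intro: negligible_subset[of "{r}"])
  moreover have "{0<..r} \<union> {r..} = {0<..}" using r by auto
  ultimately show ?thesis by simp
qed

end
lemma norm_line:
  fixes d :: "'a::euclidean_space"
  assumes "d \<noteq> 0" and sg: "\<sigma> = 1 \<or> \<sigma> = -1"
  shows "norm (d + (\<eta> * \<sigma>) *\<^sub>R (d /\<^sub>R norm d)) = \<bar>norm d + \<eta> * \<sigma>\<bar>"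
proof -
  have n: "0 < norm d" using assms by simp
  have "d + (\<eta> * \<sigma>) *\<^sub>R (d /\<^sub>R norm d) = (1 + \<eta> * \<sigma> / norm d) *\<^sub>R d"
    by (simp add: algebra_simps divide_inverse)
  then have "norm (d + (\<eta> * \<sigma>) *\<^sub>R (d /\<^sub>R norm d)) = \<bar>1 + \<eta> * \<sigma> / norm d\<bar> * norm d"
    by simp
  also have "... = \<bar>norm d + \<eta> * \<sigma>\<bar>"
    using n by (simp add: abs_mult[symmetric] field_simps)
  finally show ?thesis .
qed

lemma two_sided_eq:
  fixes x x0 :: "'a::euclidean_space"
  assumes "x \<noteq> x0" and sg: "\<sigma> = 1 \<or> \<sigma> = -1"
  shows "two_sided_integrand s (\<lambda>y. A * norm (y - x0) powr (2 * s - 1) + B) x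
           (\<sigma> *\<^sub>R ((x - x0) /\<^sub>R norm (x - x0)))
         = (\<lambda>\<eta>. A * FF (norm (x - x0)) (2 * s - 1) \<eta>)"
proof
  fix \<eta>
  define d where "d = x - x0"
  have d: "d \<noteq> 0" using assms by (simp add: d_def)
  have e1: "x + \<eta> *\<^sub>R (\<sigma> *\<^sub>R (d /\<^sub>R norm d)) - x0 = d + (\<eta> * \<sigma>) *\<^sub>R (d /\<^sub>R norm d)"
    by (simp add: d_def algebra_simps)
  have e2: "x - \<eta> *\<^sub>R (\<sigma> *\<^sub>R (d /\<^sub>R norm d)) - x0 = d + (\<eta> * (-\<sigma>)) *\<^sub>R (d /\<^sub>R norm d)"
    by (simp add: d_def algebra_simps)
  have sg': "-\<sigma> = 1 \<or> -\<sigma> = -1" using sg by auto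
  have ex: "\<eta> powr (1 + 2 * s) = \<eta> powr ((2 * s - 1) + 2)" by (simp add: algebra_simps)
  define P1 where "P1 = \<bar>norm d + \<eta> * \<sigma>\<bar> powr (2 * s - 1)"
  define P2 where "P2 = \<bar>norm d + \<eta> * (-\<sigma>)\<bar> powr (2 * s - 1)"
  define U where "U = \<bar>norm d + \<eta>\<bar> powr (2 * s - 1) + \<bar>norm d - \<eta>\<bar> powr (2 * s - 1)"
  define q where "q = norm d powr (2 * s - 1)"
  have key: "P1 + P2 = U"
    unfolding P1_def P2_def U_def using sg by auto
  have N: "A * P1 + B + (A * P2 + B) - 2 * (A * q + B) = A * (U - 2 * q)"
  proof -
    have "A * P1 + B + (A * P2 + B) - 2 * (A * q + B) = A * ((P1 + P2) - 2 * q)"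
      by (simp add: algebra_simps)
    then show ?thesis unfolding key .
  qed
  show "two_sided_integrand s (\<lambda>y. A * norm (y - x0) powr (2 * s - 1) + B) x
           (\<sigma> *\<^sub>R ((x - x0) /\<^sub>R norm (x - x0))) \<eta>
         = A * FF (norm (x - x0)) (2 * s - 1) \<eta>"
    unfolding two_sided_integrand_def FF_def d_def[symmetric] e1 e2
      norm_line[OF d sg] norm_line[OF d sg'] ex
    unfolding P1_def[symmetric] P2_def[symmetric] q_def[symmetric] N
    unfolding U_def by simp
qed

theorem lemma3p6:
  fixes s A B :: real and x0 x :: "'a::euclidean_space"
  assumes "1/2 < s" "s < 1" and "x \<noteq> x0"
  shows "inf_frac_lap_defined s (\<lambda>y. A * norm (y - x0) powr (2 * s - 1) + B) x
       \<and> inf_frac_lap s (\<lambda>y. A * norm (y - x0) powr (2 * s - 1) + B) x = 0"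
proof -
  define \<phi> where "\<phi> = (\<lambda>y. A * norm (y - x0) powr (2 * s - 1) + B)"
  define d where "d = x - x0"
  define r where "r = norm d"
  define c where "c = A * (2 * s - 1) * r powr ((2 * s - 1) - 2)"
  have d: "d \<noteq> 0" using assms by (simp add: d_def)
  have r: "0 < r" using d by (simp add: r_def)
  have a0: "0 < 2 * s - 1" and a1: "2 * s - 1 < 1" using assms by auto
  have der: "(\<phi> has_derivative (\<lambda>h. (c *\<^sub>R d) \<bullet> h)) (at x)"
    unfolding \<phi>_def c_def r_def d_def using phi_deriv[OF assms(3)] .
  have gr: "grad \<phi> x = c *\<^sub>R d" by (rule grad_eqI[OF der])
  have diff: "\<phi> differentiable (at x)" using der by (auto simp: differentiable_def)
  show ?thesis
  proof (cases "A = 0")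
    case True
    then have g0: "grad \<phi> x = 0" using gr by (simp add: c_def)
    have z: "one_sided_integrand s \<phi> x y = (\<lambda>_. 0)" for y
      using True by (auto simp: one_sided_integrand_def \<phi>_def)
    have ne: "sphere (0::'a) 1 \<noteq> {}" by simp
    have "inf_frac_lap_defined s \<phi> x"
      unfolding inf_frac_lap_defined_def using diff g0 z by (simp add: integrable_0)
    moreover have "inf_frac_lap s \<phi> x = 0"
      unfolding inf_frac_lap_def using g0 z ne by simp
    ultimately show ?thesis unfolding \<phi>_def by simp
  next
    case False
    have cpos: "r powr ((2 * s - 1) - 2) > 0" using r by simp
    have c0: "c \<noteq> 0" using False a0 cpos by (simp add: c_def)
    have gne: "grad \<phi> x \<noteq> 0" using gr c0 d by simp
    define \<sigma> where "\<sigma> = c / \<bar>c\<bar>"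
    have sg: "\<sigma> = 1 \<or> \<sigma> = -1" using c0 by (auto simp: \<sigma>_def abs_if)
    have v: "grad \<phi> x /\<^sub>R norm (grad \<phi> x) = \<sigma> *\<^sub>R ((x - x0) /\<^sub>R norm (x - x0))"
      unfolding gr \<sigma>_def d_def[symmetric] by (simp add: divide_inverse ac_simps)
    have ts: "two_sided_integrand s \<phi> x (grad \<phi> x /\<^sub>R norm (grad \<phi> x))
                = (\<lambda>\<eta>. A * FF r (2 * s - 1) \<eta>)"
    proof -
      have "two_sided_integrand s \<phi> x (grad \<phi> x /\<^sub>R norm (grad \<phi> x))
          = two_sided_integrand s \<phi> x (\<sigma> *\<^sub>R ((x - x0) /\<^sub>R norm (x - x0)))"
        by (simp only: v)
      also have "... = (\<lambda>\<eta>. A * FF (norm (x - x0)) (2 * s - 1) \<eta>)"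
        unfolding \<phi>_def by (rule two_sided_eq[OF assms(3) sg])
      finally show ?thesis by (simp add: r_def d_def)
    qed
    have "(FF r (2 * s - 1) has_integral 0) {0<..}"
      by (rule FF_total[OF r a0 a1])
    then have hi: "((\<lambda>\<eta>. A * FF r (2 * s - 1) \<eta>) has_integral 0) {0<..}"
      using has_integral_mult_right[of "FF r (2 * s - 1)" 0 "{0<..}" A] by simp
    have "inf_frac_lap_defined s \<phi> x"
      unfolding inf_frac_lap_defined_def using diff gne ts hi by auto
    moreover have "inf_frac_lap s \<phi> x = 0"
      unfolding inf_frac_lap_def using gne ts integral_unique[OF hi] by simp
    ultimately show ?thesis unfolding \<phi>_def by simp
  qed
qed


end
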